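(* Let $\mathcal G$ be a strongly connected directed graph with no self loops, vertex set $\{1,\dots,n\}$ and edge set $\{1,\dots,m\}$. Let $B=S-D$ be its incidence matrix and let $W=\mathbf{1}z^\mathsf{T}$ be as in the context. Let $\omega^{\mathrm u}\in\mathbb{R}^n$ be constant. Consider the dynamics \[ \dot{\tilde\theta}(t)=\omega^{\mathrm u}+c(t),\qquad \tilde\beta(t)=B^\mathsf{T}\tilde\theta(t),\qquad y(t)=D\tilde\beta(t). \] Let $g$ be an edge with destination vertex $i=\mathrm{dst}(g)$. Suppose that for $t\in[t_1,t_2]$ the controller is \[ c(t)=q+k_2\,\mathrm{sign}\big(\tilde\beta_g(t)\big)\,e_i, \qquad\text{where } q=(W-I)\omega^{\mathrm u} \text{ and } k_2>0. \] Let $h=|\tilde\beta_g(t_1)|/k_2$ and assume $t_2>t_1+h$. Then \[ \tilde\beta(t_2)=(I+B^\mathsf{T}DE^g)\,\tilde\beta(t_1). \]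
   Context: The matrices $S,D\in\mathbb{R}^{n\times m}$ are defined by $S_{ie}=1$ if node $i$ is the source of edge $e$ and $0$ otherwise, and $D_{ie}=1$ if node $i$ is the destination of edge $e$ and $0$ otherwise. The vector $\mathbf{1}$ is the all-ones vector. The matrix $Q=DB^\mathsf{T}$ is an irreducible rate matrix. Let $z>0$ satisfy $z^\mathsf{T}Q=0$ and $\mathbf{1}^\mathsf{T}z=1$, and set $W=\mathbf{1}z^\mathsf{T}$. $e_i\in\mathbb{R}^n$ is the $i$-th standard basis vector. $E^g\in\mathbb{R}^{m\times m}$ is the matrix whose entries are all zero except $E^g_{gg}=1$. The convention $\mathrm{sign}(0)=0$ is used. *)

theory Defs
  imports "HOL-Analysis.Analysis"
begin

definition src_mat :: "('m \<Rightarrow> 'n) \<Rightarrow> real^'m^'n" where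
  "src_mat src = (\<chi> i e. if src e = i then 1 else 0)"

definition dst_mat :: "('m \<Rightarrow> 'n) \<Rightarrow> real^'m^'n" where
  "dst_mat dst = (\<chi> i e. if dst e = i then 1 else 0)"

definition incidence :: "('m \<Rightarrow> 'n) \<Rightarrow> ('m \<Rightarrow> 'n) \<Rightarrow> real^'m^'n" where
  "incidence src dst = src_mat src - dst_mat dst"

definition strongly_connected :: "('m::finite \<Rightarrow> 'n::finite) \<Rightarrow> ('m \<Rightarrow> 'n) \<Rightarrow> bool" where
  "strongly_connected src dst \<longleftrightarrow>
     (\<forall>u v. (u, v) \<in> (range (\<lambda>e. (src e, dst e)))\<^sup>*)"

definition rate_Q :: "('m::finite \<Rightarrow> 'n::finite) \<Rightarrow> ('m \<Rightarrow> 'n) \<Rightarrow> real^'n^'n" where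
  "rate_Q src dst = dst_mat dst ** transpose (incidence src dst)"

definition Wmat :: "real^'n \<Rightarrow> real^'n^'n" where
  "Wmat z = (\<chi> a b. z $ b)"

definition Emat :: "'m \<Rightarrow> real^'m^'m" where
  "Emat g = (\<chi> a b. if a = g \<and> b = g then 1 else 0)"

end

theory Submission
  imports Defs
begin

lemma scalar_key:
  fixes f :: "real \<Rightarrow> real"
  assumes k: "k > 0" and ab: "a \<le> b"
    and I: "\<forall>t\<in>{a..b}. ((\<lambda>s. k * sgn (f s)) has_integral (f a - f t)) {a..t}"
    and big: "b > a + \<bar>f a\<bar> / k"
  shows "f b = 0"
proof -
  let ?p = "\<lambda>s. k * sgn (f s)"
  have intg: "?p integrable_on {a..b}" using I ab by auto
  have fe: "f t = f a - integral {a..t} ?p" if "t \<in> {a..b}" for t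
  proof -
    have "integral {a..t} ?p = f a - f t" using I that by (meson integral_unique)
    then show ?thesis by simp
  qed
  have cont: "continuous_on {a..b} f"
  proof -
    have "continuous_on {a..b} (\<lambda>t. f a - integral {a..t} ?p)"
      by (intro continuous_intros indefinite_integral_continuous_1 intg)
    moreover have "continuous_on {a..b} f = continuous_on {a..b} (\<lambda>t. f a - integral {a..t} ?p)"
      by (rule continuous_on_cong[OF refl]) (metis fe)
    ultimately show ?thesis by simp
  qed
  have seg: "(?p has_integral (f x - f y)) {x..y}" if "a \<le> x" "x \<le> y" "y \<le> b" for x y
  proof -
    have "?p integrable_on {x..y}" using intg that integrable_subinterval_real
      by (metis atLeastatMost_subset_iff)
    then obtain j where j: "(?p has_integral j) {x..y}" by blast
    have "(?p has_integral (f a - f x) + j) {a..y}"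
      using has_integral_combine[OF that(1,2) _ j] I that by auto
    moreover have "(?p has_integral (f a - f y)) {a..y}" using I that by auto
    ultimately have "f a - f x + j = f a - f y" by (rule has_integral_unique)
    then have "j = f x - f y" by linarith
    then show ?thesis using j by simp
  qed
  have sgnc: "sgn (f x) = sgn (f y)" if H: "a \<le> x" "x \<le> y" "y \<le> b" "\<forall>s\<in>{x..y}. f s \<noteq> 0" for x y
  proof (rule ccontr)
    assume ne: "sgn (f x) \<noteq> sgn (f y)"
    have cxy: "continuous_on {x..y} f" using cont that
      by (meson atLeastatMost_subset_iff continuous_on_subset)
    have fx: "f x \<noteq> 0" "f y \<noteq> 0" using that by auto
    show False
    proof (cases "f x < 0")
      case True
      then have "f y > 0" using ne fx by (smt (verit) sgn_neg sgn_pos)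
      then obtain s where "x \<le> s" "s \<le> y" "f s = 0" using IVT'[of f x 0 y] True H cxy \<open>f y > 0\<close> by auto
      then show False using H by auto
    next
      case False
      then have "f x > 0" "f y < 0" using ne fx by (smt (verit) sgn_neg sgn_pos)+
      then obtain s where "x \<le> s" "s \<le> y" "f s = 0" using IVT2'[of f y 0 x] H cxy \<open>f y < 0\<close> \<open>f x > 0\<close> by auto
      then show False using H by auto
    qed
  qed
  have lin: "f y = f x - k * (y - x) * sgn (f y)"
    if "a \<le> x" "x < y" "y \<le> b" "\<forall>s\<in>{x<..y}. f s \<noteq> 0" for x y
  proof -
    have sc: "sgn (f s) = sgn (f y)" if "s \<in> {x..y} - {x}" for s
      using sgnc[of s y] that \<open>a \<le> x\<close> \<open>y \<le> b\<close> \<open>\<forall>s\<in>{x<..y}. f s \<noteq> 0\<close> by auto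
    have cI: "((\<lambda>s. k * sgn (f y)) has_integral (y - x) * (k * sgn (f y))) {x..y}"
      using has_integral_const_real[of "k * sgn (f y)" x y] that by simp
    have "(?p has_integral (y - x) * (k * sgn (f y))) {x..y}"
      by (rule has_integral_spike_finite[of "{x}", OF _ _ cI]) (simp, metis sc)
    moreover have "(?p has_integral (f x - f y)) {x..y}" using seg that by auto
    ultimately have "(y - x) * (k * sgn (f y)) = f x - f y" by (rule has_integral_unique)
    then show ?thesis by (simp add: algebra_simps)
  qed
  show ?thesis
  proof (rule ccontr)
    assume fb: "f b \<noteq> 0"
    define Z where "Z = {s \<in> {a..b}. f s = 0}"
    show False
    proof (cases "Z = {}")
      case True
      then have nz: "\<forall>s\<in>{a..b}. f s \<noteq> 0" unfolding Z_def by auto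
      have s: "sgn (f a) = sgn (f b)" using sgnc[of a b] ab nz by auto
      have "a < b" using big k by (smt (verit) divide_nonneg_pos)
      then have e: "f b = f a - k * (b - a) * sgn (f b)" using lin[of a b] nz by auto
      have "k * (b - a) > \<bar>f a\<bar>" using big k by (simp add: field_simps)
      then show False using e s fb
        by (cases "f b > 0") (auto simp: sgn_if split: if_splits)
    next
      case False
      have cl: "closed Z" unfolding Z_def
        by (rule continuous_closed_preimage_constant[OF cont closed_atLeastAtMost])
      have bd: "bdd_above Z" unfolding Z_def by (auto intro: bdd_aboveI[of _ b])
      define c where "c = Sup Z"
      have cZ: "c \<in> Z" unfolding c_def using closed_contains_Sup[OF False bd cl] .
      have up: "s \<le> c" if "s \<in> Z" for s unfolding c_def using cSup_upper[OF that bd] .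
      have "c \<le> b" "f c = 0" using cZ unfolding Z_def by auto
      then have "c < b" using fb by (cases "c = b") auto
      have nz: "\<forall>s\<in>{c<..b}. f s \<noteq> 0"
      proof
        fix s assume s: "s \<in> {c<..b}"
        show "f s \<noteq> 0"
        proof
          assume "f s = 0"
          then have "s \<in> Z" using s cZ unfolding Z_def by auto
          then show False using up s by force
        qed
      qed
      have e: "f b = f c - k * (b - c) * sgn (f b)" using lin[of c b] nz \<open>c < b\<close> cZ unfolding Z_def by auto
      have "f c = 0" using cZ unfolding Z_def by auto
      moreover have "k * (b - c) > 0" using k \<open>c < b\<close> by simp
      ultimately show False using e fb
        by (cases "f b > 0") (auto simp: sgn_if split: if_splits)
    qed
  qed
qed
lemma Emat_mult: "Emat g *v x = x $ g *\<^sub>R axis g 1" for x :: "real^'m::finite"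
  unfolding Emat_def by (auto simp: vec_eq_iff matrix_vector_mult_def axis_def mult_if_delta)

lemma dst_mat_axis: "dst_mat dst *v axis g 1 = axis (dst g) 1"
proof -
  have e: "(\<Sum>j\<in>UNIV. if dst j = a then if j = g then 1 else 0 else 0) = (\<Sum>j\<in>UNIV. if j = g then (if dst g = a then 1 else 0) else (0::real))" for a
    by (rule sum.cong) auto
  show ?thesis unfolding dst_mat_def
    by (auto simp: vec_eq_iff matrix_vector_mult_def axis_def mult_if_delta e)
qed

theorem lemma1:
  fixes src dst :: "'m::finite \<Rightarrow> 'n::finite"
    and z omega :: "real^'n"
    and theta c :: "real \<Rightarrow> real^'n"
    and g :: 'm and k2 t1 t2 :: real
  defines "B \<equiv> incidence src dst"
    and "D \<equiv> dst_mat dst"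
    and "i \<equiv> dst g"
    and "q \<equiv> (Wmat z - mat 1) *v omega"
    and "beta \<equiv> (\<lambda>t. transpose (incidence src dst) *v theta t)"
    and "h \<equiv> \<bar>(transpose (incidence src dst) *v theta t1) $ g\<bar> / k2"
  assumes no_loops: "\<forall>e. src e \<noteq> dst e"
    and sc: "strongly_connected src dst"
    and z_pos: "\<forall>j. z $ j > 0"
    and z_stat: "z v* rate_Q src dst = 0"
    and z_sum: "sum (\<lambda>j. z $ j) UNIV = 1"
    and dyn: "\<forall>t\<in>{t1..t2}. ((\<lambda>s. omega + c s) has_integral (theta t - theta t1)) {t1..t}"
    and ctrl: "\<forall>t\<in>{t1..t2}. c t = q + (k2 * sgn (beta t $ g)) *\<^sub>R axis i 1"
    and k2: "k2 > 0"
    and t2: "t2 > t1 + h"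
  shows "beta t2 = (mat 1 + transpose B ** D ** Emat g) *v beta t1"
proof -
  define v where "v = transpose (incidence src dst)"
  define u where "u = v *v axis i 1"
  define f where "f t = beta t $ g" for t
  have vB: "transpose B = v" unfolding B_def v_def by simp
  have beta_v: "beta t = v *v theta t" for t unfolding beta_def v_def by simp
  have vent: "v $ e $ j = (if src e = j then 1 else 0) - (if dst e = j then 1 else 0)" for e j
    unfolding v_def incidence_def src_mat_def dst_mat_def transpose_def by simp
  have vconst: "v *v (\<chi> a. C) = 0" for C :: real
  proof -
    have "(v *v (\<chi> a. C)) $ e = 0" for e
    proof -
      have "(v *v (\<chi> a. C)) $ e = (\<Sum>j\<in>UNIV. v $ e $ j * C)"
        by (simp add: matrix_vector_mult_def)
      also have "\<dots> = (\<Sum>j\<in>UNIV. (if src e = j then C else 0)) - (\<Sum>j\<in>UNIV. (if dst e = j then C else 0))"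
      proof -
        have "v $ e $ j * C = (if src e = j then C else 0) - (if dst e = j then C else 0)" for j
          unfolding vent by simp
        then show ?thesis by (simp add: sum_subtractf)
      qed
      also have "\<dots> = 0" by simp
      finally show ?thesis .
    qed
    then show ?thesis by (simp add: vec_eq_iff)
  qed
  have Wc: "Wmat z *v x = (\<chi> a. \<Sum>b\<in>UNIV. z $ b * x $ b)" for x
    unfolding Wmat_def by (simp add: matrix_vector_mult_def)
  have oq: "omega + q = Wmat z *v omega"
    unfolding q_def by (simp add: matrix_vector_mult_diff_rdistrib)
  have ug: "u $ g = -1"
  proof -
    have "u $ g = (\<Sum>j\<in>UNIV. v $ g $ j * (if j = i then 1 else 0))"
      unfolding u_def by (simp add: matrix_vector_mult_def axis_def)
    also have "\<dots> = v $ g $ i" by (simp add: if_distrib cong: if_cong)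
    also have "\<dots> = -1" unfolding vent i_def using no_loops by simp
    finally show ?thesis .
  qed
  have integrand: "v *v (omega + c s) = (k2 * sgn (f s)) *\<^sub>R u" if "s \<in> {t1..t2}" for s
  proof -
    have "omega + c s = Wmat z *v omega + (k2 * sgn (f s)) *\<^sub>R axis i 1"
      using ctrl that oq unfolding f_def by (simp add: add.assoc[symmetric])
    then show ?thesis unfolding u_def Wc
      by (simp add: matrix_vector_right_distrib matrix_vector_mult_scaleR vconst)
  qed
  have D1: "((\<lambda>s. (k2 * sgn (f s)) *\<^sub>R u) has_integral (beta t - beta t1)) {t1..t}"
    if t: "t \<in> {t1..t2}" for t
  proof -
    have "(((*v) v) \<circ> (\<lambda>s. omega + c s) has_integral v *v (theta t - theta t1)) {t1..t}"
      by (rule has_integral_linear[OF _ matrix_vector_mul_bounded_linear]) (use dyn t in auto)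
    then have "((\<lambda>s. v *v (omega + c s)) has_integral (beta t - beta t1)) {t1..t}"
      by (simp add: o_def beta_v matrix_vector_mult_diff_distrib)
    moreover have "\<And>s. s \<in> {t1..t} \<Longrightarrow> v *v (omega + c s) = (k2 * sgn (f s)) *\<^sub>R u"
      using integrand t by auto
    ultimately show ?thesis using has_integral_cong by (smt (verit))
  qed
  have E1: "((\<lambda>s. k2 * sgn (f s)) has_integral (f t1 - f t)) {t1..t}"
    if t: "t \<in> {t1..t2}" for t
  proof -
    have "((\<lambda>x. x $ g) \<circ> (\<lambda>s. (k2 * sgn (f s)) *\<^sub>R u) has_integral (beta t - beta t1) $ g) {t1..t}"
      by (rule has_integral_linear[OF D1[OF t] bounded_linear_vec_nth])
    then have "((\<lambda>s. - (k2 * sgn (f s))) has_integral (f t - f t1)) {t1..t}"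
      by (simp add: o_def ug f_def)
    from has_integral_neg[OF this] show ?thesis by simp
  qed
  have h': "h = \<bar>f t1\<bar> / k2" unfolding h_def f_def beta_def by simp
  have "\<bar>f t1\<bar> / k2 \<ge> 0" using k2 by simp
  then have "t1 \<le> t2" using t2 h' by linarith
  have f2: "f t2 = 0"
    by (rule scalar_key[OF k2 \<open>t1 \<le> t2\<close>]) (use E1 t2 h' in auto)
  have "((\<lambda>s. (k2 * sgn (f s)) *\<^sub>R u) has_integral (f t1 *\<^sub>R u)) {t1..t2}"
    using has_integral_scaleR_left[OF E1[of t2]] f2 \<open>t1 \<le> t2\<close> by simp
  moreover have "((\<lambda>s. (k2 * sgn (f s)) *\<^sub>R u) has_integral (beta t2 - beta t1)) {t1..t2}"
    using D1 \<open>t1 \<le> t2\<close> by simp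
  ultimately have diff: "beta t2 - beta t1 = f t1 *\<^sub>R u" using has_integral_unique by blast
  have Ex: "Emat g *v x = x $ g *\<^sub>R axis g 1" for x :: "real^'m" by (rule Emat_mult)
  have Dx: "D *v axis g 1 = axis i 1" unfolding D_def i_def by (rule dst_mat_axis)
  have "(mat 1 + transpose B ** D ** Emat g) *v beta t1 = beta t1 + f t1 *\<^sub>R u"
    unfolding vB u_def f_def
    by (simp add: matrix_vector_mult_add_rdistrib matrix_vector_mul_assoc[symmetric] Ex
        matrix_vector_mult_scaleR Dx)
  then show ?thesis using diff by (simp add: algebra_simps)
qed

end
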